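(* Let $f$ be a nonconstant harmonic function on $K$ with $f(p_0)=\alpha$, $f(p_1)=\beta$, $f(p_2)=\gamma$. Then the restrictions of $f$ to all three edges $[p_0,p_1]$, $[p_0,p_2]$, $[p_1,p_2]$ are simultaneously strictly monotone if and only if at least one of the equalities $2\alpha=\beta+\gamma$, $2\beta=\alpha+\gamma$, $2\gamma=\alpha+\beta$ holds.
   Context: Let $p_0,p_1,p_2$ be the vertices of a unit equilateral triangle in $\mathbb{R}^2$, $F_i(x)=(x+p_i)/2$, and $K$ the Sierpinski gasket (the attractor of $F_0,F_1,F_2$). Minimal triangles of the graph $G_m$ are the triangles with vertices $F_w(p_0),F_w(p_1),F_w(p_2)$ for words $w$ of length $m$. A continuous $f:K\to\mathbb{R}$ is harmonic if for every $m\ge0$ and every minimal triangle of $G_m$ with vertices $v_i,v_j,v_k$, the value at the midpoint $v_{ij}$ of $[v_i,v_j]$ is $\frac15(2f(v_i)+2f(v_j)+f(v_k))$; such $f$ is uniquely determined by its values at $p_0,p_1,p_2$. Each edge $[p_i,p_j]$ is a straight segment contained in $K$, and monotonicity of the restriction refers to a linear parametrization of the segment. *)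

theory Defs
  imports "HOL-Analysis.Analysis"
begin

definition vtx :: "complex \<Rightarrow> complex \<Rightarrow> complex \<Rightarrow> nat \<Rightarrow> complex" where
  "vtx p0 p1 p2 i = (if i = 0 then p0 else if i = 1 then p1 else p2)"

definition sg_map :: "complex \<Rightarrow> complex \<Rightarrow> complex \<Rightarrow> nat \<Rightarrow> complex \<Rightarrow> complex" where
  "sg_map p0 p1 p2 i x = (x + vtx p0 p1 p2 i) / 2"

fun sg_word :: "complex \<Rightarrow> complex \<Rightarrow> complex \<Rightarrow> nat list \<Rightarrow> complex \<Rightarrow> complex" where
  "sg_word p0 p1 p2 [] = id"
| "sg_word p0 p1 p2 (i # w) = sg_map p0 p1 p2 i \<circ> sg_word p0 p1 p2 w"

text \<open>K is the attractor of F_0, F_1, F_2: a nonempty compact set with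
  K = F_0(K) \<union> F_1(K) \<union> F_2(K) (unique by Hutchinson's theorem).\<close>
definition is_sg_attractor :: "complex \<Rightarrow> complex \<Rightarrow> complex \<Rightarrow> complex set \<Rightarrow> bool" where
  "is_sg_attractor p0 p1 p2 K \<longleftrightarrow> compact K \<and> K \<noteq> {} \<and>
     K = sg_map p0 p1 p2 0 ` K \<union> sg_map p0 p1 p2 1 ` K \<union> sg_map p0 p1 p2 2 ` K"

definition sg_harmonic :: "complex \<Rightarrow> complex \<Rightarrow> complex \<Rightarrow> complex set \<Rightarrow> (complex \<Rightarrow> real) \<Rightarrow> bool" where
  "sg_harmonic p0 p1 p2 K f \<longleftrightarrow> continuous_on K f \<and>
     (\<forall>w i j k. set w \<subseteq> {0,1,2} \<longrightarrow> i \<in> {0,1,2} \<longrightarrow> j \<in> {0,1,2} \<longrightarrow> k \<in> {0,1,2} \<longrightarrow>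
        i \<noteq> j \<longrightarrow> j \<noteq> k \<longrightarrow> i \<noteq> k \<longrightarrow>
        (let v = (\<lambda>l. sg_word p0 p1 p2 w (vtx p0 p1 p2 l)) in
          f ((v i + v j) / 2) = (2 * f (v i) + 2 * f (v j) + f (v k)) / 5))"

definition strict_mono_on_edge :: "(complex \<Rightarrow> real) \<Rightarrow> complex \<Rightarrow> complex \<Rightarrow> bool" where
  "strict_mono_on_edge f a b \<longleftrightarrow>
     strict_mono_on {0..1::real} (\<lambda>t. f (a + complex_of_real t * (b - a))) \<or>
     strict_mono_on {0..1::real} (\<lambda>t. - f (a + complex_of_real t * (b - a)))"

end

theory Submission
  imports Defs
begin

definition V :: "complex \<Rightarrow> complex \<Rightarrow> complex \<Rightarrow> nat list \<Rightarrow> nat \<Rightarrow> complex" where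
  "V p0 p1 p2 w l = sg_word p0 p1 p2 w (vtx p0 p1 p2 l)"

definition HR :: "complex \<Rightarrow> complex \<Rightarrow> complex \<Rightarrow> (complex \<Rightarrow> real) \<Rightarrow> bool" where
  "HR p0 p1 p2 f \<longleftrightarrow> (\<forall>w i j k. set w \<subseteq> {0,1,2} \<longrightarrow> i \<in> {0,1,2} \<longrightarrow> j \<in> {0,1,2} \<longrightarrow> k \<in> {0,1,2} \<longrightarrow>
        i \<noteq> j \<longrightarrow> j \<noteq> k \<longrightarrow> i \<noteq> k \<longrightarrow>
        f ((V p0 p1 p2 w i + V p0 p1 p2 w j) / 2) = (2 * f (V p0 p1 p2 w i) + 2 * f (V p0 p1 p2 w j) + f (V p0 p1 p2 w k)) / 5)"

lemma HR_of_harm: "sg_harmonic p0 p1 p2 K f \<Longrightarrow> HR p0 p1 p2 f"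
  unfolding sg_harmonic_def HR_def V_def Let_def by blast

lemma HR_D: "HR p0 p1 p2 f \<Longrightarrow> set w \<subseteq> {0,1,2} \<Longrightarrow> i \<in> {0,1,2} \<Longrightarrow> j \<in> {0,1,2} \<Longrightarrow> k \<in> {0,1,2} \<Longrightarrow>
  i \<noteq> j \<Longrightarrow> j \<noteq> k \<Longrightarrow> i \<noteq> k \<Longrightarrow>
  f ((V p0 p1 p2 w i + V p0 p1 p2 w j) / 2) = (2 * f (V p0 p1 p2 w i) + 2 * f (V p0 p1 p2 w j) + f (V p0 p1 p2 w k)) / 5"
  unfolding HR_def by blast

lemma HR_neg: "HR p0 p1 p2 f \<Longrightarrow> HR p0 p1 p2 (\<lambda>x. - f x)"
  unfolding HR_def by auto

lemma sg_word_affine: "\<exists>c. \<forall>x. sg_word p0 p1 p2 w x = x / 2 ^ length w + c"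
proof (induction w)
  case Nil then show ?case by (auto intro: exI[of _ 0])
next
  case (Cons i w)
  then obtain c where c: "\<forall>x. sg_word p0 p1 p2 w x = x / 2 ^ length w + c" by blast
  show ?case
    by (rule exI[of _ "(c + vtx p0 p1 p2 i)/2"]) (simp add: c sg_map_def field_simps)
qed

lemma sg_word_lin: "sg_word p0 p1 p2 w (a + t * (b - a)) = sg_word p0 p1 p2 w a + t * (sg_word p0 p1 p2 w b - sg_word p0 p1 p2 w a)"
proof -
  obtain c where c: "\<forall>x. sg_word p0 p1 p2 w x = x / 2 ^ length w + c" using sg_word_affine by blast
  show ?thesis by (simp add: c field_simps)
qed

lemma sg_word_mid: "sg_word p0 p1 p2 w ((a + b) / 2) = (sg_word p0 p1 p2 w a + sg_word p0 p1 p2 w b) / 2"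
proof -
  obtain c where c: "\<forall>x. sg_word p0 p1 p2 w x = x / 2 ^ length w + c" using sg_word_affine by blast
  show ?thesis by (simp add: c field_simps)
qed

lemma sg_word_append: "sg_word p0 p1 p2 (w @ v) = sg_word p0 p1 p2 w \<circ> sg_word p0 p1 p2 v"
  by (induction w) auto

lemma V_snoc: "V p0 p1 p2 (w @ [m]) l = (V p0 p1 p2 w l + V p0 p1 p2 w m) / 2"
  unfolding V_def sg_word_append by (simp add: sg_map_def sg_word_mid)

lemma V_Nil[simp]: "V p0 p1 p2 [] l = vtx p0 p1 p2 l"
  by (simp add: V_def)

lemma sg_word_rep: "sg_word p0 p1 p2 (replicate n i) x = vtx p0 p1 p2 i + (x - vtx p0 p1 p2 i) / 2 ^ n"
proof (induction n)
  case 0 then show ?case by simp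
next
  case (Suc n)
  have "sg_word p0 p1 p2 (replicate (Suc n) i) x = (vtx p0 p1 p2 i + (x - vtx p0 p1 p2 i) / 2 ^ n + vtx p0 p1 p2 i) / 2"
    using Suc by (simp add: sg_map_def)
  also have "\<dots> = vtx p0 p1 p2 i + (x - vtx p0 p1 p2 i) / 2 ^ Suc n" by (simp add: field_simps)
  finally show ?case .
qed

lemma dyadic_mono:
  assumes HR: "HR p0 p1 p2 f"
  shows "set w \<subseteq> {0,1,2} \<Longrightarrow> i \<in> {0,1,2} \<Longrightarrow> j \<in> {0,1,2} \<Longrightarrow> k \<in> {0,1,2} \<Longrightarrow> i \<noteq> j \<Longrightarrow> j \<noteq> k \<Longrightarrow> i \<noteq> k \<Longrightarrow>
    f (V p0 p1 p2 w i) < f (V p0 p1 p2 w j) \<Longrightarrow>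
    \<bar>2 * f (V p0 p1 p2 w k) - f (V p0 p1 p2 w i) - f (V p0 p1 p2 w j)\<bar> \<le> 3 * (f (V p0 p1 p2 w j) - f (V p0 p1 p2 w i)) \<Longrightarrow>
    m < 2 ^ n \<Longrightarrow>
    f (V p0 p1 p2 w i + of_real (real m / 2 ^ n) * (V p0 p1 p2 w j - V p0 p1 p2 w i))
     < f (V p0 p1 p2 w i + of_real (real (Suc m) / 2 ^ n) * (V p0 p1 p2 w j - V p0 p1 p2 w i))"
proof (induction n arbitrary: w m)
  case 0
  then show ?case by simp
next
  case (Suc n)
  define A where "A = V p0 p1 p2 w i"
  define B where "B = V p0 p1 p2 w j"
  define C where "C = V p0 p1 p2 w k"
  have fAB: "f ((A + B)/2) = (2*f A + 2*f B + f C)/5"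
    unfolding A_def B_def C_def by (rule HR_D[OF HR]) (use Suc.prems in auto)
  have fBA: "f ((B + A)/2) = (2*f A + 2*f B + f C)/5" using fAB by (simp add: add.commute)
  have fCA: "f ((C + A)/2) = (2*f C + 2*f A + f B)/5"
    unfolding A_def B_def C_def by (rule HR_D[OF HR]) (use Suc.prems in auto)
  have fCB: "f ((C + B)/2) = (2*f C + 2*f B + f A)/5"
    unfolding A_def B_def C_def by (rule HR_D[OF HR]) (use Suc.prems in auto)
  have lt: "f A < f B" and cone: "\<bar>2 * f C - f A - f B\<bar> \<le> 3 * (f B - f A)"
    using Suc.prems by (auto simp: A_def B_def C_def)
  have c1: "2 * f C - f A - f B \<le> 3*(f B - f A)" and c2: "-(2 * f C - f A - f B) \<le> 3*(f B - f A)"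
    using cone by (auto simp: abs_le_iff)
  show ?case
  proof (cases "m < 2 ^ n")
    case True
    let ?w = "w @ [i]"
    have Vi: "V p0 p1 p2 ?w i = A" by (simp add: V_snoc A_def)
    have Vj: "V p0 p1 p2 ?w j = (B + A)/2" by (simp add: V_snoc A_def B_def)
    have Vk: "V p0 p1 p2 ?w k = (C + A)/2" by (simp add: V_snoc A_def C_def)
    have sw: "set ?w \<subseteq> {0,1,2}" using Suc.prems by auto
    have lt': "f (V p0 p1 p2 ?w i) < f (V p0 p1 p2 ?w j)" unfolding Vi Vj fBA using lt c1 c2 by argo
    have cone': "\<bar>2 * f (V p0 p1 p2 ?w k) - f (V p0 p1 p2 ?w i) - f (V p0 p1 p2 ?w j)\<bar> \<le> 3 * (f (V p0 p1 p2 ?w j) - f (V p0 p1 p2 ?w i))"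
      unfolding Vi Vj Vk fBA fCA using lt c1 c2 unfolding abs_le_iff by argo
    have IH: "f (A + of_real (real m / 2 ^ n) * ((B + A)/2 - A))
     < f (A + of_real (real (Suc m) / 2 ^ n) * ((B + A)/2 - A))"
      using Suc.IH[OF sw Suc.prems(2-7) lt' cone' True] unfolding Vi Vj .
    have e1: "A + of_real (real m / 2 ^ n) * ((B + A)/2 - A) = A + of_real (real m / 2 ^ Suc n) * (B - A)"
      by (simp add: field_simps)
    have e2: "A + of_real (real (Suc m) / 2 ^ n) * ((B + A)/2 - A) = A + of_real (real (Suc m) / 2 ^ Suc n) * (B - A)"
      by (simp add: field_simps)
    have "f (A + of_real (real m / 2 ^ Suc n) * (B - A)) < f (A + of_real (real (Suc m) / 2 ^ Suc n) * (B - A))"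
      using IH unfolding e1 e2 .
    then show ?thesis by (simp only: A_def B_def)
  next
    case False
    let ?w = "w @ [j]"
    define m' where "m' = m - 2 ^ n"
    have m': "real m = real m' + 2 ^ n" "m' < 2 ^ n" using False Suc.prems(10) by (auto simp: m'_def)
    have Vi: "V p0 p1 p2 ?w i = (A + B)/2" by (simp add: V_snoc A_def B_def)
    have Vj: "V p0 p1 p2 ?w j = B" by (simp add: V_snoc B_def)
    have Vk: "V p0 p1 p2 ?w k = (C + B)/2" by (simp add: V_snoc B_def C_def)
    have sw: "set ?w \<subseteq> {0,1,2}" using Suc.prems by auto
    have lt': "f (V p0 p1 p2 ?w i) < f (V p0 p1 p2 ?w j)" unfolding Vi Vj fAB using lt c1 c2 by argo
    have cone': "\<bar>2 * f (V p0 p1 p2 ?w k) - f (V p0 p1 p2 ?w i) - f (V p0 p1 p2 ?w j)\<bar> \<le> 3 * (f (V p0 p1 p2 ?w j) - f (V p0 p1 p2 ?w i))"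
      unfolding Vi Vj Vk fAB fCB using lt c1 c2 unfolding abs_le_iff by argo
    have IH: "f ((A + B)/2 + of_real (real m' / 2 ^ n) * (B - (A + B)/2))
     < f ((A + B)/2 + of_real (real (Suc m') / 2 ^ n) * (B - (A + B)/2))"
      using Suc.IH[OF sw Suc.prems(2-7) lt' cone' m'(2)] unfolding Vi Vj .
    have e1: "(A + B)/2 + of_real (real m' / 2 ^ n) * (B - (A + B)/2) = A + of_real (real m / 2 ^ Suc n) * (B - A)"
      unfolding m' by (simp add: field_simps)
    have e2: "(A + B)/2 + of_real (real (Suc m') / 2 ^ n) * (B - (A + B)/2) = A + of_real (real (Suc m) / 2 ^ Suc n) * (B - A)"
      using m'(1) by (simp add: field_simps)
    have "f (A + of_real (real m / 2 ^ Suc n) * (B - A)) < f (A + of_real (real (Suc m) / 2 ^ Suc n) * (B - A))"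
      using IH unfolding e1 e2 .
    then show ?thesis by (simp only: A_def B_def)
  qed
qed

lemma dyadic_chain:
  fixes h :: "real \<Rightarrow> real"
  assumes step: "\<And>n m. m < 2^n \<Longrightarrow> h (real m / 2^n) < h (real (Suc m) / 2^n)"
  shows "m1 < m2 \<Longrightarrow> m2 \<le> 2^n \<Longrightarrow> h (real m1 / 2^n) < h (real m2 / 2^n)"
proof (induction m2)
  case 0 then show ?case by simp
next
  case (Suc q)
  show ?case
  proof (cases "m1 = q")
    case True then show ?thesis using step[of q n] Suc.prems by simp
  next
    case False
    then have "h (real m1 / 2^n) < h (real q / 2^n)" using Suc by simp
    also have "\<dots> < h (real (Suc q) / 2^n)" using step[of q n] Suc.prems by simp
    finally show ?thesis .
  qed
qed

definition dy :: "nat \<Rightarrow> real \<Rightarrow> nat" where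
  "dy n t = nat \<lfloor>t * 2 ^ n\<rfloor>"

lemma dy_props:
  assumes "t \<in> {0..1}"
  shows "dy n t \<le> 2 ^ n" "real (dy n t) / 2 ^ n \<le> t" "t - 1 / 2 ^ n < real (dy n t) / 2 ^ n"
    "real (dy n t) / 2 ^ n \<in> {0..1}"
proof -
  have t: "0 \<le> t" "t \<le> 1" using assms by auto
  have p: "(0::real) < 2 ^ n" by simp
  have fl: "real (dy n t) = of_int \<lfloor>t * 2 ^ n\<rfloor>" unfolding dy_def using t by simp
  have a: "of_int \<lfloor>t * 2 ^ n\<rfloor> \<le> t * 2 ^ n" by (rule of_int_floor_le)
  have b: "t * 2 ^ n < of_int \<lfloor>t * 2 ^ n\<rfloor> + 1" by (rule real_of_int_floor_add_one_gt)
  have c: "t * 2 ^ n \<le> 2 ^ n" using t by simp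
  show 2: "real (dy n t) / 2 ^ n \<le> t" using a p unfolding fl by (simp add: divide_le_eq)
  have "(t * 2 ^ n - 1) / 2 ^ n < of_int \<lfloor>t * 2 ^ n\<rfloor> / 2 ^ n"
    by (rule divide_strict_right_mono) (use b p in auto)
  moreover have "(t * 2 ^ n - 1) / 2 ^ n = t - 1 / 2 ^ n" by (simp add: field_simps)
  ultimately show 3: "t - 1 / 2 ^ n < real (dy n t) / 2 ^ n" unfolding fl by simp
  have "of_int \<lfloor>t * 2 ^ n\<rfloor> \<le> (2::real) ^ n" using a c by linarith
  then have r: "real (dy n t) \<le> real ((2::nat) ^ n)" unfolding fl by simp
  show "dy n t \<le> 2 ^ n" using r by (simp only: of_nat_le_iff)
  have "real (dy n t) / 2 ^ n \<le> 1" using 2 t by linarith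
  then show "real (dy n t) / 2 ^ n \<in> {0..1}" by simp
qed

lemma dy_mono: "t1 \<le> t2 \<Longrightarrow> dy n t1 \<le> dy n t2"
  unfolding dy_def by (intro nat_mono floor_mono) simp

lemma dy_lim:
  assumes "t \<in> {0..1}"
  shows "(\<lambda>n. real (dy n t) / 2 ^ n) \<longlonglongrightarrow> t"
proof (rule tendsto_sandwich[of "\<lambda>n. t - (1/2) ^ n" _ _ "\<lambda>n. t"])
  show "\<forall>\<^sub>F n in sequentially. t - (1 / 2) ^ n \<le> real (dy n t) / 2 ^ n"
    using dy_props(3)[OF assms] by (auto simp: power_one_over less_imp_le)
  show "\<forall>\<^sub>F n in sequentially. real (dy n t) / 2 ^ n \<le> t"
    using dy_props(2)[OF assms] by auto
  have "(\<lambda>n. t - (1/2::real) ^ n) \<longlonglongrightarrow> t - 0"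
    by (intro tendsto_intros LIMSEQ_power_zero) simp
  then show "(\<lambda>n. t - (1/2::real) ^ n) \<longlonglongrightarrow> t" by simp
qed simp

lemma dyadic_to_strict:
  fixes h :: "real \<Rightarrow> real"
  assumes cont: "continuous_on {0..1} h"
    and step: "\<And>n m. m < 2^n \<Longrightarrow> h (real m / 2^n) < h (real (Suc m) / 2^n)"
  shows "strict_mono_on {0..1} h"
proof -
  have chain_le: "h (real m1 / 2^n) \<le> h (real m2 / 2^n)" if "m1 \<le> m2" "m2 \<le> 2^n" for m1 m2 n
    using dyadic_chain[OF step, of m1 m2 n] that by (cases "m1 = m2") auto
  have lim: "(\<lambda>n. h (real (dy n t) / 2 ^ n)) \<longlonglongrightarrow> h t" if "t \<in> {0..1}" for t
    by (rule continuous_on_tendsto_compose[OF cont dy_lim[OF that] that])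
       (use dy_props(4)[OF that] in auto)
  have le: "h t1 \<le> h t2" if "t1 \<in> {0..1}" "t2 \<in> {0..1}" "t1 \<le> t2" for t1 t2
  proof (rule LIMSEQ_le[OF lim[OF that(1)] lim[OF that(2)]])
    show "\<exists>N. \<forall>n\<ge>N. h (real (dy n t1) / 2 ^ n) \<le> h (real (dy n t2) / 2 ^ n)"
      using chain_le dy_mono[OF that(3)] dy_props(1)[OF that(2)] by blast
  qed
  show ?thesis
  proof (rule strict_mono_onI)
    fix t1 t2 :: real assume t1: "t1 \<in> {0..1}" and t2: "t2 \<in> {0..1}" and lt: "t1 < t2"
    obtain n where n: "2 / (t2 - t1) < 2 ^ n" using real_arch_pow[of 2 "2 / (t2 - t1)"] by auto
    have p: "(0::real) < 2 ^ n" by simp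
    have n': "2 / 2 ^ n < t2 - t1" using n lt p by (simp add: field_simps)
    define m where "m = Suc (dy n t1)"
    have m1: "t1 < real m / 2 ^ n" using dy_props(3)[OF t1, of n] unfolding m_def by (simp add: add_divide_distrib)
    have m2: "real (Suc m) / 2 ^ n < t2" using dy_props(2)[OF t1, of n] n' unfolding m_def
      by (simp add: add_divide_distrib)
    have t21: "t2 \<le> 1" using t2 by simp
    have m3: "real (Suc m) / 2 ^ n \<le> 1" using m2 t21 by linarith
    have m4: "Suc m \<le> 2 ^ n"
    proof -
      have "real (Suc m) \<le> real ((2::nat) ^ n)" using m3 p by (simp add: divide_le_eq)
      then show ?thesis by (simp only: of_nat_le_iff)
    qed
    have mle: "m \<le> 2 ^ n" using m4 by simp
    have "real m / 2 ^ n \<le> 1" using mle p by (simp add: divide_le_eq)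
    then have "h t1 \<le> h (real m / 2 ^ n)" using le[OF t1 _ less_imp_le[OF m1]] m1 t1
      by auto
    also have "\<dots> < h (real (Suc m) / 2 ^ n)" using step[of m n] m4 by simp
    also have "\<dots> \<le> h t2" using le[OF _ t2 less_imp_le[OF m2]] m1 t1 m3 by auto
    finally show "h t1 < h t2" .
  qed
qed

lemma attr_eq: "is_sg_attractor p0 p1 p2 K \<Longrightarrow>
  K = sg_map p0 p1 p2 0 ` K \<union> sg_map p0 p1 p2 1 ` K \<union> sg_map p0 p1 p2 2 ` K"
  by (simp add: is_sg_attractor_def)

lemma attr_map_in:
  assumes K: "is_sg_attractor p0 p1 p2 K" and i: "i \<in> {0,1,2}" and x: "x \<in> K"
  shows "sg_map p0 p1 p2 i x \<in> K"
proof -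
  have "sg_map p0 p1 p2 i x \<in> sg_map p0 p1 p2 0 ` K \<union> sg_map p0 p1 p2 1 ` K \<union> sg_map p0 p1 p2 2 ` K"
    using i x by auto
  then show ?thesis using attr_eq[OF K] by blast
qed

lemma sg_word_in_K:
  assumes K: "is_sg_attractor p0 p1 p2 K"
  shows "set w \<subseteq> {0,1,2} \<Longrightarrow> x \<in> K \<Longrightarrow> sg_word p0 p1 p2 w x \<in> K"
  by (induction w) (auto intro: attr_map_in[OF K])

lemma vtx_in_K:
  assumes K: "is_sg_attractor p0 p1 p2 K"
  shows "vtx p0 p1 p2 l \<in> K"
proof -
  define i where "i = (if l = 0 then 0 else if l = 1 then 1 else (2::nat))"
  have vi: "vtx p0 p1 p2 l = vtx p0 p1 p2 i" "i \<in> {0,1,2}" by (auto simp: vtx_def i_def)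
  obtain x where x: "x \<in> K" using K by (auto simp: is_sg_attractor_def)
  define v where "v = vtx p0 p1 p2 i"
  have "(\<lambda>n. v + (x - v) * (1/2::complex) ^ n) \<longlonglongrightarrow> v + (x - v) * 0"
    by (intro tendsto_intros LIMSEQ_power_zero) simp
  moreover have "v + (x - v) * (1/2::complex) ^ n = sg_word p0 p1 p2 (replicate n i) x" for n
    by (simp add: sg_word_rep v_def power_one_over)
  ultimately have lim: "(\<lambda>n. sg_word p0 p1 p2 (replicate n i) x) \<longlonglongrightarrow> v" by simp
  have cK: "closed K" using K compact_imp_closed by (auto simp: is_sg_attractor_def)
  have "v \<in> K"
    by (rule closed_sequentially[OF cK _ lim]) (use x vi(2) in \<open>auto intro!: sg_word_in_K[OF K]\<close>)
  then show ?thesis using vi v_def by simp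
qed

lemma V_in_K:
  assumes K: "is_sg_attractor p0 p1 p2 K" and w: "set w \<subseteq> {0,1,2}"
  shows "V p0 p1 p2 w l \<in> K"
  unfolding V_def by (rule sg_word_in_K[OF K w vtx_in_K[OF K]])

lemma dyadic_in_K:
  assumes K: "is_sg_attractor p0 p1 p2 K"
  shows "set w \<subseteq> {0,1,2} \<Longrightarrow> i \<in> {0,1,2} \<Longrightarrow> j \<in> {0,1,2} \<Longrightarrow> m \<le> 2 ^ n \<Longrightarrow>
    V p0 p1 p2 w i + of_real (real m / 2 ^ n) * (V p0 p1 p2 w j - V p0 p1 p2 w i) \<in> K"
proof (induction n arbitrary: w m)
  case 0
  then have "m = 0 \<or> m = 1" by auto
  then show ?case using V_in_K[OF K "0.prems"(1)] by auto
next
  case (Suc n)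
  define A where "A = V p0 p1 p2 w i"
  define B where "B = V p0 p1 p2 w j"
  show ?case
  proof (cases "m \<le> 2 ^ n")
    case True
    let ?w = "w @ [i]"
    have sw: "set ?w \<subseteq> {0,1,2}" using Suc.prems by auto
    have Vi: "V p0 p1 p2 ?w i = A" by (simp add: V_snoc A_def)
    have Vj: "V p0 p1 p2 ?w j = (B + A)/2" by (simp add: V_snoc A_def B_def)
    have IH: "A + of_real (real m / 2 ^ n) * ((B + A)/2 - A) \<in> K"
      using Suc.IH[OF sw Suc.prems(2,3) True] unfolding Vi Vj .
    have e1: "A + of_real (real m / 2 ^ n) * ((B + A)/2 - A) = A + of_real (real m / 2 ^ Suc n) * (B - A)"
      by (simp add: field_simps)
    have "A + of_real (real m / 2 ^ Suc n) * (B - A) \<in> K" using IH unfolding e1 .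
    then show ?thesis by (simp only: A_def B_def)
  next
    case False
    let ?w = "w @ [j]"
    define m' where "m' = m - 2 ^ n"
    have m': "real m = real m' + 2 ^ n" "m' \<le> 2 ^ n" using False Suc.prems(4) by (auto simp: m'_def)
    have sw: "set ?w \<subseteq> {0,1,2}" using Suc.prems by auto
    have Vi: "V p0 p1 p2 ?w i = (A + B)/2" by (simp add: V_snoc A_def B_def)
    have Vj: "V p0 p1 p2 ?w j = B" by (simp add: V_snoc B_def)
    have IH: "(A + B)/2 + of_real (real m' / 2 ^ n) * (B - (A + B)/2) \<in> K"
      using Suc.IH[OF sw Suc.prems(2,3) m'(2)] unfolding Vi Vj .
    have e1: "(A + B)/2 + of_real (real m' / 2 ^ n) * (B - (A + B)/2) = A + of_real (real m / 2 ^ Suc n) * (B - A)"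
      unfolding m' by (simp add: field_simps)
    have "A + of_real (real m / 2 ^ Suc n) * (B - A) \<in> K" using IH unfolding e1 .
    then show ?thesis by (simp only: A_def B_def)
  qed
qed

lemma segment_in_K:
  assumes K: "is_sg_attractor p0 p1 p2 K" and ij: "i \<in> {0,1,2}" "j \<in> {0,1,2}" and t: "t \<in> {0..1}"
  shows "vtx p0 p1 p2 i + of_real t * (vtx p0 p1 p2 j - vtx p0 p1 p2 i) \<in> K"
proof -
  define g where "g s = vtx p0 p1 p2 i + of_real s * (vtx p0 p1 p2 j - vtx p0 p1 p2 i)" for s
  have lim: "(\<lambda>n. g (real (dy n t) / 2 ^ n)) \<longlonglongrightarrow> g t"
    unfolding g_def by (intro tendsto_intros dy_lim[OF t])
  have gK: "\<And>n. g (real (dy n t) / 2 ^ n) \<in> K"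
    using dyadic_in_K[OF K _ ij dy_props(1)[OF t], of "[]"] unfolding g_def by simp
  have cK: "closed K" using K compact_imp_closed by (auto simp: is_sg_attractor_def)
  have "g t \<in> K" by (rule closed_sequentially[where f="\<lambda>n. g (real (dy n t) / 2 ^ n)", OF cK gK lim])
  then show ?thesis by (simp add: g_def)
qed

lemma edge_strict_gen:
  assumes K: "is_sg_attractor p0 p1 p2 K" and HR: "HR p0 p1 p2 g" and cont: "continuous_on K g"
    and ijk: "i \<in> {0,1,2}" "j \<in> {0,1,2}" "k \<in> {0,1,2}" "i \<noteq> j" "j \<noteq> k" "i \<noteq> k"
    and lt: "g (vtx p0 p1 p2 i) < g (vtx p0 p1 p2 j)"
    and cone: "\<bar>2 * g (vtx p0 p1 p2 k) - g (vtx p0 p1 p2 i) - g (vtx p0 p1 p2 j)\<bar> \<le> 3 * (g (vtx p0 p1 p2 j) - g (vtx p0 p1 p2 i))"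
  shows "strict_mono_on {0..1} (\<lambda>t. g (vtx p0 p1 p2 i + of_real t * (vtx p0 p1 p2 j - vtx p0 p1 p2 i)))"
proof (rule dyadic_to_strict)
  show "continuous_on {0..1} (\<lambda>t. g (vtx p0 p1 p2 i + of_real t * (vtx p0 p1 p2 j - vtx p0 p1 p2 i)))"
    by (rule continuous_on_compose2[OF cont]) (auto intro!: continuous_intros segment_in_K[OF K ijk(1,2)])
  fix n m :: nat assume "m < 2 ^ n"
  then show "g (vtx p0 p1 p2 i + of_real (real m / 2 ^ n) * (vtx p0 p1 p2 j - vtx p0 p1 p2 i))
     < g (vtx p0 p1 p2 i + of_real (real (Suc m) / 2 ^ n) * (vtx p0 p1 p2 j - vtx p0 p1 p2 i))"
    using dyadic_mono[OF HR, of "[]" i j k m n] ijk lt cone by simp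
qed

lemma edge_sufficient:
  assumes K: "is_sg_attractor p0 p1 p2 K" and harm: "sg_harmonic p0 p1 p2 K f"
    and ijk: "i \<in> {0,1,2}" "j \<in> {0,1,2}" "k \<in> {0,1,2}" "i \<noteq> j" "j \<noteq> k" "i \<noteq> k"
    and ne: "f (vtx p0 p1 p2 j) \<noteq> f (vtx p0 p1 p2 i)"
    and cone: "\<bar>2 * f (vtx p0 p1 p2 k) - f (vtx p0 p1 p2 i) - f (vtx p0 p1 p2 j)\<bar> \<le> 3 * \<bar>f (vtx p0 p1 p2 j) - f (vtx p0 p1 p2 i)\<bar>"
  shows "strict_mono_on_edge f (vtx p0 p1 p2 i) (vtx p0 p1 p2 j)"
proof -
  have HR: "HR p0 p1 p2 f" using harm by (rule HR_of_harm)
  have cont: "continuous_on K f" using harm by (simp add: sg_harmonic_def)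
  show ?thesis
  proof (cases "f (vtx p0 p1 p2 i) < f (vtx p0 p1 p2 j)")
    case True
    then show ?thesis unfolding strict_mono_on_edge_def
      using edge_strict_gen[OF K HR cont ijk True] cone True by simp
  next
    case False
    then have lt: "- f (vtx p0 p1 p2 i) < - f (vtx p0 p1 p2 j)" using ne by simp
    have cone': "\<bar>2 * - f (vtx p0 p1 p2 k) - - f (vtx p0 p1 p2 i) - - f (vtx p0 p1 p2 j)\<bar> \<le> 3 * (- f (vtx p0 p1 p2 j) - - f (vtx p0 p1 p2 i))"
      using cone lt by (simp add: abs_if split: if_splits)
    have "strict_mono_on {0..1} (\<lambda>t. - f (vtx p0 p1 p2 i + of_real t * (vtx p0 p1 p2 j - vtx p0 p1 p2 i)))"
      by (rule edge_strict_gen[OF K HR_neg[OF HR] continuous_on_minus[OF cont] ijk lt cone'])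
    then show ?thesis unfolding strict_mono_on_edge_def by simp
  qed
qed

lemma sm_sign:
  fixes h :: "real \<Rightarrow> real"
  assumes sm: "strict_mono_on {0..1} h \<or> strict_mono_on {0..1} (\<lambda>t. - h t)"
    and ab: "0 \<le> a" "a < b" "b \<le> 1"
  shows "0 < (h 1 - h 0) * (h b - h a)"
  using sm
proof
  assume s: "strict_mono_on {0..1} h"
  have "h 0 < h 1" by (rule strict_mono_onD[OF s]) auto
  moreover have "h a < h b" by (rule strict_mono_onD[OF s]) (use ab in auto)
  ultimately show ?thesis by simp
next
  assume s: "strict_mono_on {0..1} (\<lambda>t. - h t)"
  have "- h 0 < - h 1" by (rule strict_mono_onD[OF s]) auto
  moreover have "- h a < - h b" by (rule strict_mono_onD[OF s]) (use ab in auto)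
  ultimately show ?thesis by (simp add: mult_neg_neg)
qed

lemma path_lemma:
  assumes HR: "HR p0 p1 p2 f" and ijk: "i \<in> {0,1,2}" "j \<in> {0,1,2}" "k \<in> {0,1,2}" "i \<noteq> j" "j \<noteq> k" "i \<noteq> k"
    and pos: "\<And>n. \<sigma> * (f (V p0 p1 p2 (replicate n i) j) - f (vtx p0 p1 p2 i)) > 0"
  shows "0 \<le> \<sigma> * (f (vtx p0 p1 p2 j) + f (vtx p0 p1 p2 k) - 2 * f (vtx p0 p1 p2 i))"
proof -
  define u where "u = f (vtx p0 p1 p2 i)"
  define s where "s n = f (V p0 p1 p2 (replicate n i) j) - u" for n
  define e where "e n = f (V p0 p1 p2 (replicate n i) k) - u" for n
  have Vi: "V p0 p1 p2 (replicate n i) i = vtx p0 p1 p2 i" for n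
    by (simp add: V_def sg_word_rep)
  have sw: "set (replicate n i) \<subseteq> {0,1,2}" for n using ijk by auto
  have rec: "s (Suc n) = (2 * s n + e n)/5 \<and> e (Suc n) = (s n + 2 * e n)/5" for n
  proof -
    have r: "replicate (Suc n) i = replicate n i @ [i]" by (simp add: replicate_append_same)
    have "f (V p0 p1 p2 (replicate (Suc n) i) j)
        = f ((V p0 p1 p2 (replicate n i) j + V p0 p1 p2 (replicate n i) i)/2)"
      by (simp only: r V_snoc)
    also have "\<dots> = (2 * f (V p0 p1 p2 (replicate n i) j) + 2 * f (V p0 p1 p2 (replicate n i) i)
        + f (V p0 p1 p2 (replicate n i) k)) / 5"
      by (rule HR_D[OF HR sw]) (use ijk in auto)
    finally have 1: "s (Suc n) = (2 * s n + e n)/5" unfolding s_def e_def Vi u_def by simp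
    have "f (V p0 p1 p2 (replicate (Suc n) i) k)
        = f ((V p0 p1 p2 (replicate n i) k + V p0 p1 p2 (replicate n i) i)/2)"
      by (simp only: r V_snoc)
    also have "\<dots> = (2 * f (V p0 p1 p2 (replicate n i) k) + 2 * f (V p0 p1 p2 (replicate n i) i)
        + f (V p0 p1 p2 (replicate n i) j)) / 5"
      by (rule HR_D[OF HR sw]) (use ijk in auto)
    finally have 2: "e (Suc n) = (s n + 2 * e n)/5" unfolding s_def e_def Vi u_def by simp
    show ?thesis using 1 2 by simp
  qed
  have P: "s n + e n = (s 0 + e 0) * (3/5) ^ n" for n
    by (induction n) (use rec in auto)
  have Q: "s n - e n = (s 0 - e 0) * (1/5) ^ n" for n
    by (induction n) (use rec in auto)
  show ?thesis
  proof (rule ccontr)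
    assume "\<not> ?thesis"
    then have neg: "\<sigma> * (s 0 + e 0) < 0" by (simp add: s_def e_def u_def algebra_simps)
    obtain n where n: "\<sigma> * (s 0 - e 0) / (- (\<sigma> * (s 0 + e 0))) < 3 ^ n"
      using real_arch_pow[of 3] by auto
    have Ypos: "0 < - (\<sigma> * (s 0 + e 0))" using neg by simp
    have n2: "\<sigma> * (s 0 - e 0) < 3 ^ n * (- (\<sigma> * (s 0 + e 0)))"
      using n unfolding pos_divide_less_eq[OF Ypos] .
    have sn: "2 * s n = (s 0 + e 0) * (3/5) ^ n + (s 0 - e 0) * (1/5) ^ n"
      using P[of n] Q[of n] by linarith
    have p35: "(3/5::real) ^ n * 5 ^ n = 3 ^ n" by (simp add: power_mult_distrib[symmetric])
    have p15: "(1/5::real) ^ n * 5 ^ n = 1" by (simp add: power_mult_distrib[symmetric])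
    have "2 * 5 ^ n * (\<sigma> * s n) = \<sigma> * 5 ^ n * (2 * s n)" by simp
    also have "\<dots> = \<sigma> * (s 0 + e 0) * ((3/5) ^ n * 5 ^ n) + \<sigma> * (s 0 - e 0) * ((1/5) ^ n * 5 ^ n)"
      unfolding sn by (simp only: algebra_simps)
    also have "\<dots> = \<sigma> * (s 0 + e 0) * 3 ^ n + \<sigma> * (s 0 - e 0)" unfolding p35 p15 by simp
    finally have eq: "2 * 5 ^ n * (\<sigma> * s n) = \<sigma> * (s 0 + e 0) * 3 ^ n + \<sigma> * (s 0 - e 0)" .
    have "0 < \<sigma> * s n" using pos[of n] by (simp add: s_def u_def)
    then have "0 < 2 * 5 ^ n * (\<sigma> * s n)" by simp
    then have "0 < \<sigma> * (s 0 + e 0) * 3 ^ n + \<sigma> * (s 0 - e 0)" using eq by simp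
    moreover have "\<sigma> * (s 0 + e 0) * 3 ^ n = 3 ^ n * (\<sigma> * (s 0 + e 0))" by simp
    ultimately show False using n2 by linarith
  qed
qed

lemma edge_necessary:
  assumes HR: "HR p0 p1 p2 f" and ijk: "i \<in> {0,1,2}" "j \<in> {0,1,2}" "k \<in> {0,1,2}" "i \<noteq> j" "j \<noteq> k" "i \<noteq> k"
    and sm: "strict_mono_on_edge f (vtx p0 p1 p2 i) (vtx p0 p1 p2 j)"
  shows "f (vtx p0 p1 p2 j) \<noteq> f (vtx p0 p1 p2 i) \<and>
    0 \<le> (f (vtx p0 p1 p2 j) - f (vtx p0 p1 p2 i)) * (f (vtx p0 p1 p2 j) + f (vtx p0 p1 p2 k) - 2 * f (vtx p0 p1 p2 i)) \<and>
    0 \<le> (f (vtx p0 p1 p2 i) - f (vtx p0 p1 p2 j)) * (f (vtx p0 p1 p2 i) + f (vtx p0 p1 p2 k) - 2 * f (vtx p0 p1 p2 j))"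
proof -
  define vi where "vi = vtx p0 p1 p2 i"
  define vj where "vj = vtx p0 p1 p2 j"
  define h where "h t = f (vi + of_real t * (vj - vi))" for t
  have smh: "strict_mono_on {0..1} h \<or> strict_mono_on {0..1} (\<lambda>t. - h t)"
    using sm unfolding strict_mono_on_edge_def h_def vi_def vj_def by simp
  have h0: "h 0 = f vi" and h1: "h 1 = f vj" by (simp_all add: h_def)
  have left: "V p0 p1 p2 (replicate n i) j = vi + of_real (1/2^n) * (vj - vi)" for n
    by (simp add: V_def sg_word_rep vi_def vj_def)
  have right: "V p0 p1 p2 (replicate n j) i = vi + of_real (1 - 1/2^n) * (vj - vi)" for n
    by (simp add: V_def sg_word_rep vi_def vj_def field_simps)
  have pw: "(1::real) / 2 ^ n \<le> 1" "(0::real) < 1 / 2 ^ n" for n by simp_all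
  have pl: "(f vj - f vi) * (f (V p0 p1 p2 (replicate n i) j) - f vi) > 0" for n
    using sm_sign[OF smh, of 0 "1/2^n"] pw[of n] unfolding left h0 h1 by (simp add: h_def)
  have pr: "(f vi - f vj) * (f (V p0 p1 p2 (replicate n j) i) - f vj) > 0" for n
  proof -
    have "0 < (h 1 - h 0) * (h 1 - h (1 - 1/2^n))"
      by (rule sm_sign[OF smh]) (use pw[of n] in auto)
    then show ?thesis unfolding right h0 h1 by (simp add: h_def algebra_simps)
  qed
  have ne: "f vj \<noteq> f vi" using pl[of 0] by auto
  have A: "0 \<le> (f vj - f vi) * (f vj + f (vtx p0 p1 p2 k) - 2 * f vi)"
    using path_lemma[OF HR ijk, of "f vj - f vi"] pl unfolding vi_def vj_def by simp
  have B: "0 \<le> (f vi - f vj) * (f vi + f (vtx p0 p1 p2 k) - 2 * f vj)"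
    using path_lemma[OF HR ijk(2,1,3) ijk(4)[symmetric] ijk(6) ijk(5), of "f vi - f vj"] pr
    unfolding vi_def vj_def by simp
  show ?thesis using ne A B unfolding vi_def vj_def by simp
qed

lemma sg_word_diff: "sg_word p0 p1 p2 w a - sg_word p0 p1 p2 w b = (a - b) / 2 ^ length w"
proof -
  obtain c where c: "\<forall>x. sg_word p0 p1 p2 w x = x / 2 ^ length w + c" using sg_word_affine by blast
  show ?thesis by (simp add: c diff_divide_distrib)
qed

lemma const_lemma:
  assumes K: "is_sg_attractor p0 p1 p2 K" and HR: "HR p0 p1 p2 f" and cont: "continuous_on K f"
    and eq: "f (vtx p0 p1 p2 0) = a" "f (vtx p0 p1 p2 1) = a" "f (vtx p0 p1 p2 2) = a"
    and x: "x \<in> K"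
  shows "f x = a"
proof -
  have allv: "set w \<subseteq> {0,1,2} \<Longrightarrow> l \<in> {0,1,2} \<Longrightarrow> f (V p0 p1 p2 w l) = a" for w l
  proof (induction w arbitrary: l rule: rev_induct)
    case Nil then show ?case using eq by auto
  next
    case (snoc m w)
    have sw: "set w \<subseteq> {0,1,2}" "m \<in> {0,1,2}" using snoc.prems by auto
    show ?case
    proof (cases "l = m")
      case True then show ?thesis using snoc.IH[OF sw(1) snoc.prems(2)] by (simp add: V_snoc)
    next
      case False
      define q where "q = 3 - l - m"
      have q: "q \<in> {0,1,2}" "l \<noteq> q" "m \<noteq> q" using False snoc.prems(2) sw(2) by (auto simp: q_def)
      have "f (V p0 p1 p2 (w @ [m]) l) = (2 * f (V p0 p1 p2 w l) + 2 * f (V p0 p1 p2 w m) + f (V p0 p1 p2 w q)) / 5"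
        unfolding V_snoc by (rule HR_D[OF HR sw(1)]) (use q False snoc.prems(2) sw(2) in auto)
      then show ?thesis using snoc.IH[OF sw(1)] q sw(2) snoc.prems(2) by simp
    qed
  qed
  have Keq: "K = sg_map p0 p1 p2 0 ` K \<union> sg_map p0 p1 p2 1 ` K \<union> sg_map p0 p1 p2 2 ` K"
    by (rule attr_eq[OF K])
  have dec: "\<exists>w y. set w \<subseteq> {0,1,2} \<and> length w = n \<and> y \<in> K \<and> x = sg_word p0 p1 p2 w y" for n
  proof (induction n)
    case 0 then show ?case using x by (intro exI[of _ "[]"] exI[of _ x]) simp
  next
    case (Suc n)
    then obtain w y where w: "set w \<subseteq> {0,1,2}" "length w = n" "y \<in> K" "x = sg_word p0 p1 p2 w y" by blast
    have "y \<in> sg_map p0 p1 p2 0 ` K \<union> sg_map p0 p1 p2 1 ` K \<union> sg_map p0 p1 p2 2 ` K"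
      using w(3) Keq by blast
    then obtain i z where iz: "i \<in> {0,1,2}" "z \<in> K" "y = sg_map p0 p1 p2 i z" by blast
    have "x = sg_word p0 p1 p2 (w @ [i]) z" using w(4) iz(3) by (simp add: sg_word_append)
    then show ?case using w iz by (intro exI[of _ "w @ [i]"] exI[of _ z]) auto
  qed
  obtain W Y where WY: "\<And>n. set (W n) \<subseteq> {0,1,2} \<and> length (W n) = n \<and> Y n \<in> K \<and> x = sg_word p0 p1 p2 (W n) (Y n)"
    using dec by metis
  have bK: "bounded K" using K compact_imp_bounded by (auto simp: is_sg_attractor_def)
  then obtain E where E: "\<forall>y\<in>K. dist (vtx p0 p1 p2 0) y \<le> E" using bounded_any_center by blast
  define z where "z n = V p0 p1 p2 (W n) 0" for n
  have zK: "z n \<in> K" for n unfolding z_def using V_in_K[OF K] WY by blast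
  have fz: "f (z n) = a" for n unfolding z_def using allv WY by blast
  have dz: "dist (z n) x \<le> E * (1/2) ^ n" for n
  proof -
    have "dist (z n) x = norm (sg_word p0 p1 p2 (W n) (Y n) - sg_word p0 p1 p2 (W n) (vtx p0 p1 p2 0))"
      using WY[of n] by (simp add: z_def V_def dist_norm norm_minus_commute)
    also have "\<dots> = norm (Y n - vtx p0 p1 p2 0) / 2 ^ n" using WY[of n] by (simp add: sg_word_diff norm_divide norm_power)
    also have "\<dots> \<le> E / 2 ^ n" using E WY[of n] by (intro divide_right_mono) (auto simp: dist_norm norm_minus_commute)
    finally show ?thesis by (simp add: power_one_over)
  qed
  have "(\<lambda>n. dist (z n) x) \<longlonglongrightarrow> 0"
  proof (rule tendsto_sandwich[of "\<lambda>n. 0" _ _ "\<lambda>n. E * (1/2) ^ n"])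
    have "(\<lambda>n. E * (1/2::real) ^ n) \<longlonglongrightarrow> E * 0" by (intro tendsto_intros LIMSEQ_power_zero) simp
    then show "(\<lambda>n. E * (1/2::real) ^ n) \<longlonglongrightarrow> 0" by simp
  qed (use dz in auto)
  then have zlim: "z \<longlonglongrightarrow> x" using tendsto_dist_iff by blast
  have "(\<lambda>n. f (z n)) \<longlonglongrightarrow> f x"
    by (rule continuous_on_tendsto_compose[OF cont zlim x]) (use zK in auto)
  then have "(\<lambda>n. a) \<longlonglongrightarrow> f x" using fz by simp
  then show "f x = a" using LIMSEQ_unique tendsto_const by blast
qed

lemma arith1:
  fixes a b c :: real
  assumes "b \<noteq> a" "0 \<le> (b - a) * (b + c - 2 * a)" "0 \<le> (a - b) * (a + c - 2 * b)"
    "c \<noteq> a" "0 \<le> (c - a) * (c + b - 2 * a)" "0 \<le> (a - c) * (a + b - 2 * c)"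
    "c \<noteq> b" "0 \<le> (c - b) * (c + a - 2 * b)" "0 \<le> (b - c) * (b + a - 2 * c)"
  shows "2 * a = b + c \<or> 2 * b = a + c \<or> 2 * c = a + b"
  using assms unfolding zero_le_mult_iff by auto

lemma arith2:
  fixes a b c :: real
  assumes "2 * a = b + c \<or> 2 * b = a + c \<or> 2 * c = a + b" "\<not> (a = b \<and> b = c)"
  shows "b \<noteq> a \<and> \<bar>2 * c - a - b\<bar> \<le> 3 * \<bar>b - a\<bar>"
  using assms by (auto simp: abs_if)

theorem theorem4:
  fixes p0 p1 p2 :: complex and K :: "complex set" and f :: "complex \<Rightarrow> real"
    and \<alpha> \<beta> \<gamma> :: real
  assumes tri: "dist p0 p1 = 1" "dist p0 p2 = 1" "dist p1 p2 = 1"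
    and K: "is_sg_attractor p0 p1 p2 K"
    and harm: "sg_harmonic p0 p1 p2 K f"
    and noncst: "\<exists>x\<in>K. \<exists>y\<in>K. f x \<noteq> f y"
    and vals: "f p0 = \<alpha>" "f p1 = \<beta>" "f p2 = \<gamma>"
  shows "(strict_mono_on_edge f p0 p1 \<and> strict_mono_on_edge f p0 p2 \<and> strict_mono_on_edge f p1 p2)
     \<longleftrightarrow> (2 * \<alpha> = \<beta> + \<gamma> \<or> 2 * \<beta> = \<alpha> + \<gamma> \<or> 2 * \<gamma> = \<alpha> + \<beta>)"
proof -
  have HR: "HR p0 p1 p2 f" using harm by (rule HR_of_harm)
  have cont: "continuous_on K f" using harm by (simp add: sg_harmonic_def)
  have v: "vtx p0 p1 p2 0 = p0" "vtx p0 p1 p2 1 = p1" "vtx p0 p1 p2 2 = p2" by (simp_all add: vtx_def)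
  show ?thesis
  proof
    assume L: "strict_mono_on_edge f p0 p1 \<and> strict_mono_on_edge f p0 p2 \<and> strict_mono_on_edge f p1 p2"
    have e01: "\<beta> \<noteq> \<alpha> \<and> 0 \<le> (\<beta> - \<alpha>) * (\<beta> + \<gamma> - 2 * \<alpha>) \<and> 0 \<le> (\<alpha> - \<beta>) * (\<alpha> + \<gamma> - 2 * \<beta>)"
      using edge_necessary[OF HR, of 0 1 2] L unfolding v vals by simp
    have e02: "\<gamma> \<noteq> \<alpha> \<and> 0 \<le> (\<gamma> - \<alpha>) * (\<gamma> + \<beta> - 2 * \<alpha>) \<and> 0 \<le> (\<alpha> - \<gamma>) * (\<alpha> + \<beta> - 2 * \<gamma>)"
      using edge_necessary[OF HR, of 0 2 1] L unfolding v vals by simp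
    have e12: "\<gamma> \<noteq> \<beta> \<and> 0 \<le> (\<gamma> - \<beta>) * (\<gamma> + \<alpha> - 2 * \<beta>) \<and> 0 \<le> (\<beta> - \<gamma>) * (\<beta> + \<alpha> - 2 * \<gamma>)"
      using edge_necessary[OF HR, of 1 2 0] L unfolding v vals by simp
    show "2 * \<alpha> = \<beta> + \<gamma> \<or> 2 * \<beta> = \<alpha> + \<gamma> \<or> 2 * \<gamma> = \<alpha> + \<beta>"
      by (rule arith1) (use e01 e02 e12 in auto)
  next
    assume R: "2 * \<alpha> = \<beta> + \<gamma> \<or> 2 * \<beta> = \<alpha> + \<gamma> \<or> 2 * \<gamma> = \<alpha> + \<beta>"
    have notall: "\<not> (\<alpha> = \<beta> \<and> \<beta> = \<gamma>)"
    proof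
      assume all: "\<alpha> = \<beta> \<and> \<beta> = \<gamma>"
      have "\<forall>x\<in>K. f x = \<alpha>"
        using const_lemma[OF K HR cont, of \<alpha>] all vals v by simp
      then show False using noncst by auto
    qed
    have c01: "\<beta> \<noteq> \<alpha> \<and> \<bar>2 * \<gamma> - \<alpha> - \<beta>\<bar> \<le> 3 * \<bar>\<beta> - \<alpha>\<bar>"
      by (rule arith2) (use R notall in auto)
    have c02: "\<gamma> \<noteq> \<alpha> \<and> \<bar>2 * \<beta> - \<alpha> - \<gamma>\<bar> \<le> 3 * \<bar>\<gamma> - \<alpha>\<bar>"
      by (rule arith2) (use R notall in auto)
    have c12: "\<gamma> \<noteq> \<beta> \<and> \<bar>2 * \<alpha> - \<beta> - \<gamma>\<bar> \<le> 3 * \<bar>\<gamma> - \<beta>\<bar>"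
      by (rule arith2) (use R notall in auto)
    have "strict_mono_on_edge f (vtx p0 p1 p2 0) (vtx p0 p1 p2 1)"
      by (rule edge_sufficient[OF K harm, of 0 1 2]) (use c01 in \<open>auto simp: vtx_def vals\<close>)
    moreover have "strict_mono_on_edge f (vtx p0 p1 p2 0) (vtx p0 p1 p2 2)"
      by (rule edge_sufficient[OF K harm, of 0 2 1]) (use c02 in \<open>auto simp: vtx_def vals\<close>)
    moreover have "strict_mono_on_edge f (vtx p0 p1 p2 1) (vtx p0 p1 p2 2)"
      by (rule edge_sufficient[OF K harm, of 1 2 0]) (use c12 in \<open>auto simp: vtx_def vals\<close>)
    ultimately show "strict_mono_on_edge f p0 p1 \<and> strict_mono_on_edge f p0 p2 \<and> strict_mono_on_edge f p1 p2"
      unfolding v by simp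
  qed
qed

end
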